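(* Let $G$ be a compact metrizable monothetic group with Haar measure $\mu$. If $A\subset G$ has $\mu(A)>0$, then $\mu(nA)>0$ for every $n\in\mathbb{Z}\setminus\{0\}$, where $nA=\{na:a\in A\}$.
   Context: A topological group is monothetic if it has a dense cyclic subgroup (hence it is abelian). *)

theory Defs
  imports "HOL-Analysis.Analysis"
begin

definition zmult :: "int \<Rightarrow> 'a::group_add \<Rightarrow> 'a" where
  "zmult k x = (if 0 \<le> k then (((+) x) ^^ nat k) 0 else - ((((+) x) ^^ nat (- k)) 0))"

definition topological_group_add_type :: "'a::{group_add,topological_space} itself \<Rightarrow> bool" where
  "topological_group_add_type (_::'a itself) \<longleftrightarrow>
     continuous_on UNIV (\<lambda>p::'a \<times> 'a. fst p + snd p) \<and> continuous_on UNIV (uminus :: 'a \<Rightarrow> 'a)"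

definition monothetic_type :: "'a::{group_add,topological_space} itself \<Rightarrow> bool" where
  "monothetic_type (_::'a itself) \<longleftrightarrow> (\<exists>g::'a. closure (range (\<lambda>k. zmult k g)) = UNIV)"

text \<open>A (left) Haar measure on a compact group: a nonzero finite Borel measure invariant under
  left translations.  (On a compact metrizable space every finite Borel measure is regular.)\<close>
definition haar_measure :: "'a::{group_add,topological_space} measure \<Rightarrow> bool" where
  "haar_measure M \<longleftrightarrow> sets M = sets borel \<and> space M = UNIV \<and>
     emeasure M UNIV < \<infinity> \<and> emeasure M UNIV > 0 \<and>
     (\<forall>g. \<forall>B\<in>sets borel. emeasure M ((+) g ` B) = emeasure M B)"

end

theory Submission
  imports Defs
begin


definition pw :: "nat \<Rightarrow> 'a::group_add \<Rightarrow> 'a" where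
  "pw m x = (((+) x) ^^ m) 0"

lemma pw_0[simp]: "pw 0 x = 0" and pw_Suc: "pw (Suc m) x = x + pw m x"
  by (simp_all add: pw_def)

lemma pw_add: "pw (a + b) x = pw a x + pw b x"
  by (induction a) (simp_all add: pw_Suc add.assoc)

lemma pw_Suc': "pw (Suc m) x = pw m x + x"
  using pw_add[of m 1 x] by (simp add: pw_Suc)

lemma pw_comm: "pw a x + pw b x = pw b x + pw a x"
  by (metis pw_add add.commute)

lemma zmult_pw: "zmult k x = (if 0 \<le> k then pw (nat k) x else - pw (nat (-k)) x)"
  by (simp add: zmult_def pw_def)

lemma comm_neg: "(a::'a::group_add) + b = b + a \<Longrightarrow> - a + b = b + - a"
  by (metis add.assoc add.left_inverse add.right_inverse add_0 add_0_right)

lemma zmult_comm: "zmult a x + zmult b x = zmult b x + zmult a x"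
proof -
  have n: "- pw i x + pw j x = pw j x + - pw i x" for i j using comm_neg pw_comm by blast
  have nn: "- pw i x + - pw j x = - pw j x + - pw i x" for i j
    using comm_neg[OF n[of j i, symmetric]] by simp
  show ?thesis
  proof (cases "0 \<le> a"; cases "0 \<le> b")
    assume "0 \<le> a" "0 \<le> b" then show ?thesis unfolding zmult_pw by (simp only: if_True pw_comm)
  next
    assume "0 \<le> a" "\<not> 0 \<le> b" then show ?thesis unfolding zmult_pw by (simp only: if_True if_False n)
  next
    assume "\<not> 0 \<le> a" "0 \<le> b" then show ?thesis unfolding zmult_pw by (simp only: if_True if_False n)
  next
    assume "\<not> 0 \<le> a" "\<not> 0 \<le> b" then show ?thesis unfolding zmult_pw by (simp only: if_True if_False nn)
  qed
qed

context
  assumes comm: "\<And>x y::'a::group_add. x + y = y + x"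
begin

lemma lcomm: "(x::'a) + (y + z) = y + (x + z)"
  by (metis add.assoc comm)

lemma pw_hom: "pw m ((x::'a) + y) = pw m x + pw m y"
  by (induction m) (simp_all add: pw_Suc add.assoc lcomm)

lemma pw_neg: "pw m (-(x::'a)) = - pw m x"
  by (induction m) (simp_all add: pw_Suc minus_add comm)

lemma zmult_hom: "zmult n ((x::'a) + y) = zmult n x + zmult n y"
  by (simp add: zmult_pw pw_hom minus_add comm)

lemma zmult_neg: "zmult n (-(x::'a)) = - zmult n x"
  by (simp add: zmult_pw pw_neg)

lemma zmult_zero: "zmult n (0::'a) = 0"
  by (metis add.right_neutral add_left_imp_eq zmult_hom)

end


lemma open_prod_in_sets:
  fixes W :: "('a::metric_space \<times> 'a) set"
  assumes cpt: "compact (UNIV::'a set)" and W: "open W" and sM: "sets M = sets (borel::'a measure)"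
  shows "W \<in> sets (M \<Otimes>\<^sub>M M)"
proof -
  have exF: "\<exists>F. finite F \<and> (UNIV::'a set) \<subseteq> (\<Union>x\<in>F. ball x (1/Suc m))" for m :: nat
  proof -
    have cov: "(UNIV::'a set) \<subseteq> (\<Union>x\<in>UNIV. ball x (1/Suc m))" by auto
    obtain C' where "finite C'" "(UNIV::'a set) \<subseteq> (\<Union>x\<in>C'. ball x (1/Suc m))"
      apply (rule compactE_image[OF cpt, where C=UNIV and f="\<lambda>x. ball x (1/Suc m)"])
        apply simp
       apply (rule cov)
      apply blast
      done
    then show ?thesis by blast
  qed
  from choice[OF allI[OF exF]] obtain F where F0: "\<forall>m. finite (F m) \<and> (UNIV::'a set) \<subseteq> (\<Union>x\<in>F m. ball x (1/Suc m))"
    ..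
  then have F: "\<And>m. finite (F m)" "\<And>m. (UNIV::'a set) \<subseteq> (\<Union>x\<in>F m. ball x (1/Suc m))" by blast+
  define Bs where "Bs = (\<Union>m. (\<lambda>x. ball x (1/Suc m)) ` F m)"
  have cBs: "countable Bs" unfolding Bs_def
    apply (rule countable_UN)
     apply simp
    apply (rule countable_image)
    apply (rule countable_finite)
    apply (rule F(1))
    done
  have oBs: "b \<in> Bs \<Longrightarrow> open b" for b unfolding Bs_def by auto
  have basis: "\<exists>b\<in>Bs. p \<in> b \<and> b \<subseteq> U" if UU: "open U" "p \<in> U" for U p
  proof -
    obtain e where e: "e > 0" "ball p e \<subseteq> U" by (rule openE[OF UU])
    obtain m :: nat where m: "2 / real (Suc m) < e"
    proof -
      obtain m where m: "inverse (real (Suc m)) < e/2" using reals_Archimedean[of "e/2"] e(1) by auto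
      then show ?thesis by (intro that[of m]) (simp add: field_simps)
    qed
    obtain x where x: "x \<in> F m" "p \<in> ball x (1/Suc m)" using F(2)[of m] by blast
    have "ball x (1/Suc m) \<subseteq> ball p e"
    proof
      fix y assume y: "y \<in> ball x (1/Suc m)"
      have "dist p y < 2 / Suc m" using x(2) y dist_triangle[of p y x]
        by (simp add: dist_commute)
      then show "y \<in> ball p e" using m by simp
    qed
    then show ?thesis using x e unfolding Bs_def by blast
  qed
  define R where "R = {b1 \<times> b2 | b1 b2. b1 \<in> Bs \<and> b2 \<in> Bs \<and> b1 \<times> b2 \<subseteq> W}"
  have "R \<subseteq> (\<lambda>(a,b). a \<times> b) ` (Bs \<times> Bs)" unfolding R_def by auto
  moreover have "countable ((\<lambda>(a,b). a \<times> b) ` (Bs \<times> Bs))" using cBs by simp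
  ultimately have cR: "countable R" by (rule countable_subset)
  have RW: "\<Union>R = W"
  proof
    show "\<Union>R \<subseteq> W" unfolding R_def by auto
    show "W \<subseteq> \<Union>R"
    proof
      fix p assume "p \<in> W"
      then obtain A B where AB: "open A" "open B" "p \<in> A \<times> B" "A \<times> B \<subseteq> W"
        using open_prod_elim[OF W \<open>p \<in> W\<close>] by blast
      obtain b1 where b1: "b1 \<in> Bs" "fst p \<in> b1" "b1 \<subseteq> A" using basis[of A "fst p"] AB by auto
      obtain b2 where b2: "b2 \<in> Bs" "snd p \<in> b2" "b2 \<subseteq> B" using basis[of B "snd p"] AB by auto
      have "b1 \<times> b2 \<in> R" unfolding R_def using b1 b2 AB by blast
      moreover have "p \<in> b1 \<times> b2" using b1 b2 by (simp add: mem_Times_iff)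
      ultimately show "p \<in> \<Union>R" by blast
    qed
  qed
  have "R \<subseteq> sets (M \<Otimes>\<^sub>M M)"
  proof
    fix r assume "r \<in> R"
    then obtain b1 b2 where "r = b1 \<times> b2" "b1 \<in> Bs" "b2 \<in> Bs" unfolding R_def by blast
    then show "r \<in> sets (M \<Otimes>\<^sub>M M)" using oBs sM by (auto intro!: pair_measureI borel_open)
  qed
  then have "\<Union>R \<in> sets (M \<Otimes>\<^sub>M M)" using cR by (intro sets.countable_Union) auto
  then show ?thesis using RW by simp
qed



lemma cadd_lemma:
  fixes f h :: "'b::topological_space \<Rightarrow> 'a::{group_add,topological_space}"
  assumes Cadd: "continuous_on UNIV (\<lambda>p::'a \<times> 'a. fst p + snd p)"
    and "continuous_on S f" "continuous_on S h"
  shows "continuous_on S (\<lambda>x. f x + h x)"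
proof -
  have "continuous_on S (\<lambda>x. (\<lambda>p::'a \<times> 'a. fst p + snd p) (f x, h x))"
    by (rule continuous_on_compose2[OF Cadd continuous_on_Pair[OF assms(2,3)]]) simp
  then show ?thesis by simp
qed

lemma cneg_lemma:
  fixes f :: "'b::topological_space \<Rightarrow> 'a::{group_add,topological_space}"
  assumes Cneg: "continuous_on UNIV (uminus :: 'a \<Rightarrow> 'a)"
    and "continuous_on S f"
  shows "continuous_on S (\<lambda>x. - f x)"
  by (rule continuous_on_compose2[OF Cneg assms(2)]) simp

lemma cont_pw:
  assumes Cadd: "continuous_on UNIV (\<lambda>p::'a::{group_add,topological_space} \<times> 'a. fst p + snd p)"
  shows "continuous_on UNIV (pw m :: 'a \<Rightarrow> 'a)"
proof (induction m)
  case 0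
  then show ?case by (simp add: continuous_on_const)
next
  case (Suc m)
  have "continuous_on UNIV (\<lambda>x::'a. x + pw m x)"
    by (rule cadd_lemma[OF Cadd continuous_on_id Suc])
  then show ?case by (simp add: pw_Suc)
qed

lemma cont_zmult:
  assumes Cadd: "continuous_on UNIV (\<lambda>p::'a::{group_add,topological_space} \<times> 'a. fst p + snd p)"
    and Cneg: "continuous_on UNIV (uminus :: 'a \<Rightarrow> 'a)"
  shows "continuous_on UNIV (zmult k :: 'a \<Rightarrow> 'a)"
proof (cases "0 \<le> k")
  case True
  then have "zmult k = (pw (nat k) :: 'a \<Rightarrow> 'a)" by (auto simp: zmult_pw)
  then show ?thesis using cont_pw[OF Cadd] by simp
next
  case False
  then have "zmult k = (\<lambda>x::'a. - pw (nat (-k)) x)" by (auto simp: zmult_pw)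
  then show ?thesis using cneg_lemma[OF Cneg cont_pw[OF Cadd]] by simp
qed

lemma vimage_translate: "(\<lambda>y. c + y) -` B = (+) (- c) ` (B::'a::group_add set)"
proof (intro set_eqI iffI)
  fix y assume "y \<in> (\<lambda>y. c + y) -` B"
  then have "c + y \<in> B" by simp
  moreover have "y = - c + (c + y)" by (simp add: add.assoc[symmetric])
  ultimately show "y \<in> (+) (- c) ` B" by blast
next
  fix y assume "y \<in> (+) (- c) ` B"
  then obtain b where "b \<in> B" "y = - c + b" by blast
  then show "y \<in> (\<lambda>y. c + y) -` B" by (simp add: add.assoc[symmetric])
qed



theorem lemma7p4:
  fixes M :: "'a::{group_add, metric_space} measure" and A :: "'a set" and n :: int
  assumes "topological_group_add_type TYPE('a)"
    and "compact (UNIV :: 'a set)"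
    and "monothetic_type TYPE('a)"
    and "haar_measure M"
    and "A \<in> sets (completion M)"
    and "emeasure (completion M) A > 0"
    and "n \<noteq> 0"
  shows "\<forall>B\<in>sets M. (\<lambda>a. zmult n a) ` A \<subseteq> B \<longrightarrow> emeasure M B > 0"
proof -
  from assms(1) have Cadd: "continuous_on UNIV (\<lambda>p::'a\<times>'a. fst p + snd p)"
    and Cneg: "continuous_on UNIV (uminus::'a\<Rightarrow>'a)"
    unfolding topological_group_add_type_def by auto
  from assms(3) obtain g :: 'a where g: "closure (range (\<lambda>k. zmult k g)) = UNIV"
    unfolding monothetic_type_def by blast
  have sM: "sets M = sets borel" and spM: "space M = UNIV" and finM: "emeasure M UNIV < \<infinity>"
    and posM: "emeasure M UNIV > 0"
    and inv: "\<And>c B. B \<in> sets borel \<Longrightarrow> emeasure M ((+) c ` B) = emeasure M B"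
    using assms(4) unfolding haar_measure_def by auto
  have ctr: "continuous_on UNIV (\<lambda>x::'a. c + x)" for c
    by (rule cadd_lemma[OF Cadd continuous_on_const continuous_on_id])
  have ctr': "continuous_on UNIV (\<lambda>x::'a. x + c)" for c
    by (rule cadd_lemma[OF Cadd continuous_on_id continuous_on_const])
  have c1: "x + zmult j g = zmult j g + x" for j x
  proof -
    have "closed {x. x + zmult j g = zmult j g + x}"
      using closed_Collect_eq[OF ctr'[of "zmult j g"] ctr[of "zmult j g"]] by simp
    moreover have "range (\<lambda>k. zmult k g) \<subseteq> {x. x + zmult j g = zmult j g + x}"
      using zmult_comm by auto
    ultimately have "closure (range (\<lambda>k. zmult k g)) \<subseteq> {x. x + zmult j g = zmult j g + x}"
      by (intro closure_minimal)
    then show ?thesis using g by auto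
  qed
  have comm: "x + y = y + x" for x y :: 'a
  proof -
    have "closed {y. x + y = y + x}"
      using closed_Collect_eq[OF ctr[of x] ctr'[of x]] by simp
    moreover have "range (\<lambda>k. zmult k g) \<subseteq> {y. x + y = y + x}"
      using c1 by auto
    ultimately have "closure (range (\<lambda>k. zmult k g)) \<subseteq> {y. x + y = y + x}"
      by (intro closure_minimal)
    then show ?thesis using g by auto
  qed
  note hom = zmult_hom[OF comm] and zneg = zmult_neg[OF comm] and z0 = zmult_zero[OF comm]
  define \<phi> where "\<phi> = (zmult n :: 'a \<Rightarrow> 'a)"
  define H where "H = range \<phi>"
  have cphi: "continuous_on UNIV \<phi>" unfolding \<phi>_def by (rule cont_zmult[OF Cadd Cneg])
  have Hclosed: "closed H" unfolding H_def
    by (intro compact_imp_closed compact_continuous_image cphi assms(2))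
  have H0: "0 \<in> H"
  proof -
    have "\<phi> 0 = 0" unfolding \<phi>_def by (rule z0)
    then show ?thesis unfolding H_def by (metis rangeI)
  qed
  have Hadd: "a + b \<in> H" if "a \<in> H" "b \<in> H" for a b
  proof -
    from that obtain x y where "a = \<phi> x" "b = \<phi> y" unfolding H_def by blast
    then have "a + b = \<phi> (x + y)" unfolding \<phi>_def by (simp add: hom)
    then show ?thesis unfolding H_def by simp
  qed
  have Hneg: "- a \<in> H" if "a \<in> H" for a
  proof -
    from that obtain x where "a = \<phi> x" unfolding H_def by blast
    then have "- a = \<phi> (- x)" unfolding \<phi>_def by (simp add: zneg)
    then show ?thesis unfolding H_def by simp
  qed
  define N where "N = nat \<bar>n\<bar>"
  have Npos: "N > 0" using assms(7) unfolding N_def by simp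
  have HN: "pw N x \<in> H" for x
  proof (cases "n > 0")
    case True
    then have "\<phi> x = pw N x" unfolding \<phi>_def N_def by (simp add: zmult_pw)
    then show ?thesis unfolding H_def by (metis rangeI)
  next
    case False
    then have "\<phi> (-x) = pw N x" unfolding \<phi>_def N_def using assms(7)
      by (simp add: zmult_pw pw_neg[OF comm])
    then show ?thesis unfolding H_def by (metis rangeI)
  qed
  define T where "T r = {x. - pw r g + x \<in> H}" for r
  define S where "S = (\<Union>r<N. T r)"
  interpret AS: abel_semigroup "(+) :: 'a \<Rightarrow> 'a \<Rightarrow> 'a"
    by unfold_locales (simp_all add: add.assoc comm)
  have S_plus: "a + g \<in> S" if "a \<in> S" for a
  proof -
    from that obtain r where r: "r < N" "- pw r g + a \<in> H" unfolding S_def T_def by auto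
    show ?thesis
    proof (cases "Suc r < N")
      case True
      have "- pw (Suc r) g + (a + g) = - (g + pw r g) + (g + a)" by (simp add: pw_Suc comm[of a g])
      also have "\<dots> = - pw r g + (- g + (g + a))" by (simp only: minus_add add.assoc)
      also have "\<dots> = - pw r g + a" by simp
      finally have "Suc r \<in> {..<N} \<and> a + g \<in> T (Suc r)" using True r unfolding T_def by simp
      then show ?thesis unfolding S_def by blast
    next
      case False
      then have SN: "Suc r = N" using r by simp
      have "pw (Suc r) g + (- pw r g + a) = g + (pw r g + (- pw r g + a))" by (simp add: pw_Suc add.assoc)
      also have "\<dots> = a + g" by (simp add: comm[of a g])
      finally have "a + g \<in> H" using Hadd[OF HN[of g] r(2)] SN by simp
      then have "0 \<in> {..<N} \<and> a + g \<in> T 0" using Npos unfolding T_def by simp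
      then show ?thesis unfolding S_def by blast
    qed
  qed
  have S_minus: "a + - g \<in> S" if "a \<in> S" for a
  proof -
    from that obtain r where r: "r < N" "- pw r g + a \<in> H" unfolding S_def T_def by auto
    show ?thesis
    proof (cases r)
      case (Suc r')
      have "- pw r' g + (a + - g) = - pw r g + a" unfolding Suc pw_Suc' minus_add
        by (simp only: add.assoc AS.commute AS.left_commute)
      then have "r' \<in> {..<N} \<and> a + - g \<in> T r'" using r Suc unfolding T_def by simp
      then show ?thesis unfolding S_def by blast
    next
      case 0
      then have aH: "a \<in> H" using r by simp
      obtain N' where N': "N = Suc N'" using Npos gr0_implies_Suc by blast
      have "- pw N' g + (a + - g) = a + - pw N g" unfolding N' pw_Suc' minus_add
        by (simp only: add.assoc AS.commute AS.left_commute)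
      then have "- pw N' g + (a + - g) \<in> H" using Hadd[OF aH Hneg[OF HN]] by simp
      then have "N' \<in> {..<N} \<and> a + - g \<in> T N'" using N' unfolding T_def by simp
      then show ?thesis unfolding S_def by blast
    qed
  qed
  have pos_S: "pw m g \<in> S" for m
  proof (induction m)
    case 0
    then show ?case unfolding S_def T_def using Npos H0 by (auto intro!: bexI[of _ 0])
  next
    case (Suc m)
    then show ?case using S_plus by (simp add: pw_Suc')
  qed
  have neg_S: "- pw m g \<in> S" for m
  proof (induction m)
    case 0
    then show ?case unfolding S_def T_def using Npos H0 by (auto intro!: bexI[of _ 0])
  next
    case (Suc m)
    then show ?case using S_minus by (simp add: pw_Suc minus_add)
  qed
  have "range (\<lambda>k. zmult k g) \<subseteq> S"
    using pos_S neg_S by (auto simp: zmult_pw)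
  moreover have Tclosed: "closed (T r)" for r
  proof -
    have "T r = (\<lambda>x. - pw r g + x) -` H" unfolding T_def by auto
    then show "closed (T r)" using closed_vimage[OF Hclosed ctr] by simp
  qed
  then have "closed S" unfolding S_def by auto
  ultimately have "closure (range (\<lambda>k. zmult k g)) \<subseteq> S" by (intro closure_minimal)
  then have SU: "S = UNIV" using g by auto
  have Hsets: "H \<in> sets M" using Hclosed sM by auto
  have TH: "T r = (+) (pw r g) ` H" for r
    unfolding T_def using vimage_translate[of "- pw r g" H] by (simp add: set_eq_iff)
  have muT: "emeasure M (T r) = emeasure M H" for r
    unfolding TH using inv Hsets sM by simp
  have "emeasure M UNIV \<le> (\<Sum>r<N. emeasure M (T r))"
    unfolding SU[symmetric] S_def using Tclosed sM
    by (intro emeasure_subadditive_finite) auto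
  also have "\<dots> = of_nat N * emeasure M H" using muT by simp
  finally have "emeasure M H \<noteq> 0" using posM by auto
  then have Hpos: "emeasure M H > 0" by (simp add: zero_less_iff_neq_zero)
  define f where "f = (\<lambda>p::'a \<times> 'a. \<phi> (fst p) + snd p)"
  have cf: "continuous_on UNIV f" unfolding f_def
    by (intro cadd_lemma[OF Cadd] continuous_on_compose2[OF cphi continuous_on_fst] continuous_on_snd
        continuous_on_id) auto
  have fmeas: "f \<in> borel_measurable (M \<Otimes>\<^sub>M M)"
  proof (rule borel_measurableI)
    fix U :: "'a set" assume "open U"
    then have "open (f -` U)" using open_vimage[OF _ cf] by simp
    then have "f -` U \<in> sets (M \<Otimes>\<^sub>M M)" by (rule open_prod_in_sets[OF assms(2) _ sM])
    then show "f -` U \<inter> space (M \<Otimes>\<^sub>M M) \<in> sets (M \<Otimes>\<^sub>M M)"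
      by (simp add: space_pair_measure spM)
  qed
  have bmM: "borel_measurable M = (borel_measurable borel :: ('a \<Rightarrow> 'a) set)"
    by (rule measurable_cong_sets[OF sM refl])
  have phimeas: "\<phi> \<in> borel_measurable M"
    using borel_measurable_continuous_onI[OF cphi] bmM by simp
  have trmeas: "(\<lambda>y. c + y) -` B \<in> sets M" if "B \<in> sets borel" for c B
  proof -
    have "(\<lambda>y::'a. c + y) \<in> borel_measurable M"
      using borel_measurable_continuous_onI[OF ctr] bmM by simp
    from measurable_sets[OF this that] show ?thesis by (simp add: spM)
  qed
  have trmeasure: "emeasure M ((\<lambda>y. c + y) -` B) = emeasure M B" if "B \<in> sets borel" for c B
    unfolding vimage_translate using inv[OF that] by simp
  interpret FM: finite_measure M
    by (rule finite_measureI) (use finM spM in simp)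
  interpret PSF: pair_sigma_finite M M
    by (simp add: pair_sigma_finite_def FM.sigma_finite_measure_axioms)
  show ?thesis
  proof (intro ballI impI)
    fix B assume B: "B \<in> sets M" "(\<lambda>a. zmult n a) ` A \<subseteq> B"
    show "emeasure M B > 0"
    proof (rule ccontr)
      assume "\<not> emeasure M B > 0"
      then have B0: "emeasure M B = 0" by (simp add: zero_less_iff_neq_zero)
      have Bb: "B \<in> sets borel" using B sM by simp
      define C where "C = \<phi> -` B"
      have Csets: "C \<in> sets M" unfolding C_def using measurable_sets[OF phimeas Bb] spM by simp
      define F where "F = (\<lambda>p. indicator B (f p) :: ennreal)"
      have Fmeas: "F \<in> borel_measurable (M \<Otimes>\<^sub>M M)" unfolding F_def
        using measurable_compose[OF fmeas borel_measurable_indicator[OF Bb]] by (simp add: comp_def)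
      have fub: "(\<integral>\<^sup>+ y. (\<integral>\<^sup>+ x. F (x, y) \<partial>M) \<partial>M) = (\<integral>\<^sup>+ x. (\<integral>\<^sup>+ y. F (x, y) \<partial>M) \<partial>M)"
        by (rule PSF.Fubini[OF Fmeas])
      have inner1: "(\<integral>\<^sup>+ y. F (x, y) \<partial>M) = 0" for x
      proof -
        have "(\<integral>\<^sup>+ y. F (x, y) \<partial>M) = (\<integral>\<^sup>+ y. indicator ((\<lambda>y. \<phi> x + y) -` B) y \<partial>M)"
          unfolding F_def f_def by (simp add: indicator_def)
        also have "\<dots> = emeasure M ((\<lambda>y. \<phi> x + y) -` B)"
          by (rule nn_integral_indicator[OF trmeas[OF Bb]])
        also have "\<dots> = 0" using trmeasure[OF Bb] B0 by simp
        finally show ?thesis .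
      qed
      have inner2: "emeasure M C * indicator H y \<le> (\<integral>\<^sup>+ x. F (x, y) \<partial>M)" for y
      proof (cases "y \<in> H")
        case True
        then obtain z where z: "y = \<phi> z" unfolding H_def by blast
        have Cb: "C \<in> sets borel" using Csets sM by simp
        have "(\<integral>\<^sup>+ x. F (x, y) \<partial>M) = (\<integral>\<^sup>+ x. indicator ((\<lambda>x. z + x) -` C) x \<partial>M)"
        proof (rule nn_integral_cong)
          fix x
          have "f (x, y) = \<phi> (z + x)" unfolding f_def z \<phi>_def by (simp add: hom comm)
          then show "F (x, y) = indicator ((\<lambda>x. z + x) -` C) x"
            unfolding F_def C_def by (simp add: indicator_def)
        qed
        also have "\<dots> = emeasure M ((\<lambda>x. z + x) -` C)"
          by (rule nn_integral_indicator[OF trmeas[OF Cb]])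
        also have "\<dots> = emeasure M C" using trmeasure[OF Cb] by simp
        finally show ?thesis using True by simp
      next
        case False
        then show ?thesis by simp
      qed
      have "emeasure M C * emeasure M H = (\<integral>\<^sup>+ y. emeasure M C * indicator H y \<partial>M)"
        using nn_integral_cmult_indicator[OF Hsets, of "emeasure M C"] by simp
      also have "\<dots> \<le> (\<integral>\<^sup>+ y. (\<integral>\<^sup>+ x. F (x, y) \<partial>M) \<partial>M)"
        by (rule nn_integral_mono) (rule inner2)
      also have "\<dots> = 0" unfolding fub inner1 by simp
      finally have "emeasure M C * emeasure M H = 0" by simp
      then have C0: "emeasure M C = 0" using Hpos by auto
      have "A \<subseteq> C" using B(2) unfolding C_def \<phi>_def by auto
      then have "emeasure (completion M) A \<le> emeasure (completion M) C"
        using Csets by (intro emeasure_mono) auto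
      also have "\<dots> = 0" using Csets C0 by simp
      finally show False using assms(6) by simp
    qed
  qed
qed

end
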